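(* Suppose that $v_k\to\bar v\in\mathcal V$ as $k\to\infty$. Then $v_{k,\mu}\to\bar v$ as $k\to\infty$ for every $\mu\in\{0,\dots,L\}$.
   Context: Let $\mathcal V=\bigotimes_{\nu=1}^d\mathbb R^{m_\nu}\cong\mathbb R^N$ with the Euclidean inner product. Let $A\in\mathbb R^{N\times N}$ be symmetric positive definite, $b\in\mathcal V\setminus\{0\}$, $f(v)=\frac{1}{\|b\|^2}(\frac12\langle Av,v\rangle-\langle b,v\rangle)$. Let $L\ge d$, $P_1,\dots,P_L$ finite-dimensional real inner product spaces, $P=P_1\times\dots\times P_L$, $U:P\to\mathcal V$ multilinear. For $\mathbf p\in P$, $W_{\mu,\mathbf p^{[\mu]}}:P_\mu\to\mathcal V$ is $q\mapsto U(p_1,\dots,p_{\mu-1},q,p_{\mu+1},\dots,p_L)$; $X^T$ transpose, $X^+$ pseudoinverse. ALS: choose $\mathbf p_1=(p_1^1,\dots,p_L^1)\in P$; for $k=1,2,\dots$ and $\mu=1,\dots,L$ in order, $W_{k,\mu}:=W_{\mu,(p_1^{k+1},\dots,p_{\mu-1}^{k+1},p_{\mu+1}^k,\dots,p_L^k)}$ and $p_\mu^{k+1}:=(W_{k,\mu}^TAW_{k,\mu})^+W_{k,\mu}^Tb$. Put $v_k=U(p_1^k,\dots,p_L^k)$ and, for $\mu\in\{0,\dots,L\}$, $v_{k,\mu}=U(p_1^{k+1},\dots,p_\mu^{k+1},p_{\mu+1}^k,\dots,p_L^k)$. *)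

theory Defs
  imports "HOL-Analysis.Analysis"
begin

text \<open>The product space P = P_1 x ... x P_L, with all factors realised as subspaces
  of one ambient Euclidean space 'p; tuples are functions on indices, zero outside 1..L.\<close>
definition prodP :: "nat \<Rightarrow> (nat \<Rightarrow> 'p::euclidean_space set) \<Rightarrow> (nat \<Rightarrow> 'p) set" where
  "prodP L Ps = {p. (\<forall>i\<in>{1..L}. p i \<in> Ps i) \<and> (\<forall>i. i \<notin> {1..L} \<longrightarrow> p i = 0)}"

definition multilinear_on ::
  "nat \<Rightarrow> (nat \<Rightarrow> 'p::euclidean_space set) \<Rightarrow> ((nat \<Rightarrow> 'p) \<Rightarrow> 'v::real_vector) \<Rightarrow> bool" where
  "multilinear_on L Ps U \<longleftrightarrow>
     (\<forall>\<mu>\<in>{1..L}. \<forall>p\<in>prodP L Ps. \<forall>x\<in>Ps \<mu>. \<forall>y\<in>Ps \<mu>. \<forall>c::real.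
        U (p(\<mu> := x + y)) = U (p(\<mu> := x)) + U (p(\<mu> := y)) \<and>
        U (p(\<mu> := c *\<^sub>R x)) = c *\<^sub>R U (p(\<mu> := x)))"

definition adjoint_on :: "'p::euclidean_space set \<Rightarrow> ('p \<Rightarrow> 'v::real_inner) \<Rightarrow> 'v \<Rightarrow> 'p" where
  "adjoint_on S W v = (THE x. x \<in> S \<and> (\<forall>q\<in>S. inner x q = inner v (W q)))"

definition pinv_on :: "'p::euclidean_space set \<Rightarrow> ('p \<Rightarrow> 'p) \<Rightarrow> 'p \<Rightarrow> 'p" where
  "pinv_on S M y = (THE x. x \<in> S \<and> (\<forall>z\<in>S. M z = 0 \<longrightarrow> inner x z = 0)
                           \<and> M x = closest_point (M ` S) y)"

definition als_W :: "((nat \<Rightarrow> 'p) \<Rightarrow> 'v) \<Rightarrow> (nat \<Rightarrow> nat \<Rightarrow> 'p::zero) \<Rightarrow> nat \<Rightarrow> nat \<Rightarrow> 'p \<Rightarrow> 'v" where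
  "als_W U p k \<mu> q = U ((\<lambda>i. if i < \<mu> then p (Suc k) i else p k i)(\<mu> := q))"

definition als_v :: "((nat \<Rightarrow> 'p) \<Rightarrow> 'v) \<Rightarrow> (nat \<Rightarrow> nat \<Rightarrow> 'p) \<Rightarrow> nat \<Rightarrow> nat \<Rightarrow> 'v" where
  "als_v U p k \<mu> = U (\<lambda>i. if i \<le> \<mu> then p (Suc k) i else p k i)"

end

theory Submission imports Defs begin

lemma inner_zero_S:
  fixes x :: "'a::real_inner"
  assumes "x \<in> S" "\<forall>q\<in>S. inner x q = 0" shows "x = 0"
  using assms by auto

lemma Asym_inner:
  fixes A :: "real^'n^'n"
  assumes "transpose A = A"
  shows "inner (A *v x) y = inner x (A *v y)"
  by (metis assms dot_lmul_matrix vector_transpose_matrix)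

locale linS =
  fixes S :: "'p::euclidean_space set" and W :: "'p \<Rightarrow> 'v::real_inner"
  assumes S: "subspace S"
   and WA: "\<And>x y. x\<in>S \<Longrightarrow> y\<in>S \<Longrightarrow> W(x+y) = W x + W y"
   and WS: "\<And>x c. x\<in>S \<Longrightarrow> W(c *\<^sub>R x) = c *\<^sub>R W x"
begin

lemma W0: "W 0 = 0"
  using WS[of 0 0] S by (simp add: subspace_0)

lemma Wdiff: "x\<in>S \<Longrightarrow> y\<in>S \<Longrightarrow> W(x-y) = W x - W y"
  using WA[of y "x-y"] S by (simp add: subspace_diff)

lemma W_sum: "finite B \<Longrightarrow> B \<subseteq> S \<Longrightarrow> W (\<Sum>e\<in>B. f e *\<^sub>R e) = (\<Sum>e\<in>B. f e *\<^sub>R W e)"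
proof (induction B rule: finite_induct)
  case empty then show ?case by (simp add: W0)
next
  case (insert a F)
  have "(\<Sum>e\<in>F. f e *\<^sub>R e) \<in> S"
    using insert S by (auto intro!: subspace_sum subspace_scale)
  then show ?case using insert S
    by (simp add: WA WS subspace_scale)
qed

lemma adj_ex: "\<exists>!x. x \<in> S \<and> (\<forall>q\<in>S. inner x q = inner v (W q))"
proof -
  obtain B where B: "0 \<notin> B" "B \<subseteq> S" "pairwise orthogonal B" "independent B" "span B = S"
    using orthogonal_basis_subspace[OF S] by metis
  have fin: "finite B" using B pairwise_orthogonal_imp_finite by blast
  have exp: "q = (\<Sum>b\<in>B. (b \<bullet> q / (b \<bullet> b)) *\<^sub>R b)" if "q \<in> S" for q
  proof -
    let ?r = "q - (\<Sum>b\<in>B. (b \<bullet> q / (b \<bullet> b)) *\<^sub>R b)"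
    have "?r \<in> span B"
      using that B by (metis (no_types, lifting) span_base span_diff span_scale span_sum)
    then have "orthogonal ?r ?r" using Gram_Schmidt_step[OF B(3)] by blast
    then show ?thesis by (simp add: orthogonal_self)
  qed
  define x where "x = (\<Sum>b\<in>B. (inner v (W b) / (b \<bullet> b)) *\<^sub>R b)"
  have xS: "x \<in> S" unfolding x_def using B S by (auto intro!: subspace_sum subspace_scale)
  have xq: "inner x q = inner v (W q)" if "q \<in> S" for q
  proof -
    have "inner x q = (\<Sum>b\<in>B. (inner v (W b) / (b \<bullet> b)) * (b \<bullet> q))"
      unfolding x_def by (simp add: inner_sum_left)
    also have "\<dots> = inner v (\<Sum>b\<in>B. (b \<bullet> q / (b \<bullet> b)) *\<^sub>R W b)"
      by (simp add: inner_sum_right mult.commute)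
    also have "\<dots> = inner v (W q)"
      using W_sum[OF fin B(2), of "\<lambda>b. b \<bullet> q / (b \<bullet> b)"] exp[OF that] by simp
    finally show ?thesis .
  qed
  show ?thesis
  proof (rule ex1I[of _ x])
    show "x \<in> S \<and> (\<forall>q\<in>S. inner x q = inner v (W q))" using xS xq by blast
  next
    fix y assume y: "y \<in> S \<and> (\<forall>q\<in>S. inner y q = inner v (W q))"
    have "y - x \<in> S" using y xS S by (simp add: subspace_diff)
    moreover have "\<forall>q\<in>S. inner (y - x) q = 0" using y xq by (simp add: inner_diff_left)
    ultimately show "y = x" using inner_zero_S by fastforce
  qed
qed

lemma adj: "adjoint_on S W v \<in> S" "q \<in> S \<Longrightarrow> inner (adjoint_on S W v) q = inner v (W q)"
  using theI'[OF adj_ex[of v]] unfolding adjoint_on_def by auto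
end

lemma key:
  fixes A :: "real^'n^'n" and W :: "'p::euclidean_space \<Rightarrow> real^'n"
  assumes L: "linS S W"
   and Asym: "transpose A = A"
   and Apd: "\<forall>x. x \<noteq> 0 \<longrightarrow> inner x (A *v x) > 0"
   and xdef: "x = pinv_on S (\<lambda>q. adjoint_on S W (A *v W q)) (adjoint_on S W b)"
  shows "x \<in> S \<and> (\<forall>q\<in>S. inner (A *v W x) (W q) = inner b (W q))"
proof -
  interpret linS S W by (fact L)
  define M where "M = (\<lambda>q. adjoint_on S W (A *v W q))"
  define y where "y = adjoint_on S W b"
  have MS: "M z \<in> S" for z unfolding M_def by (rule adj)
  have Mq: "q \<in> S \<Longrightarrow> inner (M z) q = inner (A *v W z) (W q)" for z q
    unfolding M_def by (rule adj)
  have Mlin: "M (z1 + z2) = M z1 + M z2" if "z1 \<in> S" "z2 \<in> S" for z1 z2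
  proof -
    have "M (z1 + z2) - (M z1 + M z2) \<in> S" using MS S by (simp add: subspace_diff subspace_add)
    moreover have "\<forall>q\<in>S. inner (M (z1 + z2) - (M z1 + M z2)) q = 0"
      using that by (simp add: Mq inner_diff_left inner_add_left WA matrix_vector_right_distrib inner_add_left)
    ultimately show ?thesis using inner_zero_S by fastforce
  qed
  have Msc: "M (c *\<^sub>R z) = c *\<^sub>R M z" if "z \<in> S" for z c
  proof -
    have "M (c *\<^sub>R z) - c *\<^sub>R M z \<in> S" using MS S by (simp add: subspace_diff subspace_scale)
    moreover have "\<forall>q\<in>S. inner (M (c *\<^sub>R z) - c *\<^sub>R M z) q = 0"
      using that by (simp add: Mq inner_diff_left WS matrix_vector_mult_scaleR)
    ultimately show ?thesis using inner_zero_S by fastforce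
  qed
  have M0: "M 0 = 0" using Msc[of 0 0] S by (simp add: subspace_0)
  have Mdiff: "M (z1 - z2) = M z1 - M z2" if "z1 \<in> S" "z2 \<in> S" for z1 z2
    using Mlin[of z2 "z1 - z2"] that S by (simp add: subspace_diff)
  have Msym: "inner (M z) q = inner z (M q)" if "z \<in> S" "q \<in> S" for z q
    using Mq[OF that(2), of z] Mq[OF that(1), of q] Asym_inner[OF Asym]
    by (simp add: inner_commute)
  have subR: "subspace (M ` S)"
    unfolding subspace_def
  proof (intro conjI ballI allI)
    show "0 \<in> M ` S" using M0 S subspace_0 by force
  next
    fix a c assume "a \<in> M ` S" then obtain z where "z \<in> S" "a = M z" by blast
    then show "c *\<^sub>R a \<in> M ` S" using Msc S subspace_scale by (metis image_eqI)
  next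
    fix a a' assume "a \<in> M ` S" "a' \<in> M ` S"
    then obtain z z' where "z \<in> S" "a = M z" "z' \<in> S" "a' = M z'" by blast
    then show "a + a' \<in> M ` S" using Mlin S subspace_add by (metis image_eqI)
  qed
  define c where "c = closest_point (M ` S) y"
  have cl: "closed (M ` S)" using subR closed_subspace by blast
  have cv: "convex (M ` S)" using subR subspace_imp_convex by blast
  have ne: "M ` S \<noteq> {}" using S subspace_0 by blast
  have cR: "c \<in> M ` S" unfolding c_def using closest_point_in_set[OF cl ne] .
  then obtain z0 where z0: "z0 \<in> S" "c = M z0" by blast
  have orth: "inner (y - c) (M z) = 0" if "z \<in> S" for z
  proof -
    have "c + M z \<in> M ` S" "c - M z \<in> M ` S"
      using cR that subR by (auto intro: subspace_add subspace_diff)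
    from closest_point_dot[OF cv cl this(1), of y] closest_point_dot[OF cv cl this(2), of y]
    show ?thesis unfolding c_def[symmetric] by (simp add: inner_diff_right)
  qed
  have yS: "y \<in> S" unfolding y_def by (rule adj)
  have cS: "c \<in> S" using z0 MS by simp
  define d where "d = y - c"
  have dS: "d \<in> S" unfolding d_def using yS cS S by (simp add: subspace_diff)
  have "inner (A *v W d) (W d) = 0" using orth[OF dS] Mq[OF dS, of d] Msym[OF dS dS]
    unfolding d_def[symmetric] by (simp add: inner_commute)
  then have Wd: "W d = 0" using Apd by (metis inner_commute less_irrefl)
  have "inner d d = inner d y - inner d c" unfolding d_def by (simp add: inner_diff)
  also have "inner d y = 0" using adj(2)[OF dS, of b] Wd unfolding y_def by (simp add: inner_commute)
  also have "inner d c = 0" using orth[OF z0(1)] z0 unfolding d_def by simp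
  finally have "d = 0" by simp
  then have cy: "c = y" unfolding d_def by simp
  define K where "K = {z \<in> S. M z = 0}"
  have subK: "subspace K"
    unfolding subspace_def K_def using S M0 Mlin Msc
    by (auto intro: subspace_0 subspace_add subspace_scale)
  obtain k r where kr: "k \<in> span K" "\<And>w. w \<in> span K \<Longrightarrow> orthogonal r w" "z0 = k + r"
    using orthogonal_subspace_decomp_exists by blast
  have kK: "k \<in> K" using kr(1) subK by (metis span_eq_iff)
  have rS: "r = z0 - k" using kr by simp
  have rS': "r \<in> S" using rS z0 kK S unfolding K_def by (simp add: subspace_diff)
  have Mr: "M r = c" using rS Mdiff[OF z0(1)] kK z0 unfolding K_def by auto
  have ex: "\<exists>!x. x \<in> S \<and> (\<forall>z\<in>S. M z = 0 \<longrightarrow> inner x z = 0) \<and> M x = closest_point (M ` S) y"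
  proof (rule ex1I[of _ r])
    show "r \<in> S \<and> (\<forall>z\<in>S. M z = 0 \<longrightarrow> inner r z = 0) \<and> M r = closest_point (M ` S) y"
      using rS' Mr kr(2) unfolding c_def orthogonal_def K_def by (auto intro: span_base)
  next
    fix x assume x: "x \<in> S \<and> (\<forall>z\<in>S. M z = 0 \<longrightarrow> inner x z = 0) \<and> M x = closest_point (M ` S) y"
    have rr: "r \<in> S \<and> (\<forall>z\<in>S. M z = 0 \<longrightarrow> inner r z = 0) \<and> M r = closest_point (M ` S) y"
      using rS' Mr kr(2) unfolding c_def orthogonal_def K_def by (auto intro: span_base)
    have e: "x - r \<in> S" using x rS' S by (simp add: subspace_diff)
    have me: "M (x - r) = 0" using Mdiff[of x r] x rr by simp
    have "inner (x - r) (x - r) = 0"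
      using x rr e me by (simp add: inner_diff_left)
    then show "x = r" by simp
  qed
  have xx: "x \<in> S \<and> M x = c"
    using theI'[OF ex] unfolding xdef pinv_on_def M_def[symmetric] y_def[symmetric] c_def by blast
  show ?thesis
  proof (intro conjI ballI)
    show "x \<in> S" using xx by simp
    fix q assume q: "q \<in> S"
    have "inner (A *v W x) (W q) = inner (M x) q" using Mq[OF q] by simp
    also have "\<dots> = inner y q" using xx cy by simp
    also have "\<dots> = inner b (W q)" unfolding y_def using adj(2)[OF q] .
    finally show "inner (A *v W x) (W q) = inner b (W q)" .
  qed
qed


lemma pd_bound:
  fixes A :: "real^'n^'n"
  assumes Apd: "\<forall>x. x \<noteq> 0 \<longrightarrow> inner x (A *v x) > 0"
  shows "\<exists>c>0. \<forall>x. c * (norm x)^2 \<le> inner x (A *v x)"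
proof -
  have cont: "continuous_on (sphere 0 1) (\<lambda>x::real^'n. inner x (A *v x))"
    by (intro continuous_intros linear_continuous_on matrix_vector_mul_bounded_linear)
  have ne: "sphere (0::real^'n) 1 \<noteq> {}" by simp
  obtain x0 where x0: "x0 \<in> sphere 0 1" "\<forall>y\<in>sphere 0 1. inner x0 (A *v x0) \<le> inner y (A *v y)"
    using continuous_attains_inf[OF compact_sphere ne cont] by blast
  have x0nz: "x0 \<noteq> 0" using x0(1) by auto
  define c where "c = inner x0 (A *v x0)"
  have cpos: "c > 0" unfolding c_def using Apd x0nz by blast
  have "c * (norm x)^2 \<le> inner x (A *v x)" for x
  proof (cases "x = 0")
    case True then show ?thesis by simp
  next
    case False
    define u where "u = x /\<^sub>R norm x"
    have "u \<in> sphere 0 1" unfolding u_def using False by simp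
    then have "c \<le> inner u (A *v u)" using x0 c_def by blast
    also have "inner u (A *v u) = inner x (A *v x) / (norm x)^2"
      unfolding u_def by (simp add: matrix_vector_mult_scaleR power2_eq_square field_simps)
    finally show ?thesis using False by (simp add: field_simps)
  qed
  then show ?thesis using cpos by blast
qed

lemma energy:
  fixes A :: "real^'n^'n"
  assumes Asym: "transpose A = A" and h: "inner (A *v v2) w = inner b w"
  shows "(inner (A *v (v2 + w)) (v2 + w) / 2 - inner b (v2 + w))
         - (inner (A *v v2) v2 / 2 - inner b v2) = inner w (A *v w) / 2"
proof -
  have s: "inner (A *v w) v2 = inner (A *v v2) w"
    using Asym_inner[OF Asym, of w v2] by (simp add: inner_commute)
  show ?thesis using h s
    by (simp add: matrix_vector_right_distrib inner_add_left inner_add_right inner_commute algebra_simps)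
qed

lemma lin_from_multi:
  assumes "multilinear_on L Ps U" "base \<in> prodP L Ps" "\<mu> \<in> {1..L}" "subspace (Ps \<mu>)"
  shows "linS (Ps \<mu>) (\<lambda>q. U (base(\<mu> := q)))"
  using assms unfolding linS_def multilinear_on_def by blast


theorem mainTheorem13:
  fixes d L :: nat
    and m :: "nat \<Rightarrow> nat"
    and A :: "real^'n^'n"
    and b vbar :: "real^'n"
    and Ps :: "nat \<Rightarrow> 'p::euclidean_space set"
    and U :: "(nat \<Rightarrow> 'p) \<Rightarrow> real^'n"
    and p :: "nat \<Rightarrow> nat \<Rightarrow> 'p"
  assumes dimV: "CARD('n) = (\<Prod>\<nu>\<in>{1..d}. m \<nu>)"
    and Ld: "L \<ge> d"
    and Asym: "transpose A = A"
    and Apd: "\<forall>x. x \<noteq> 0 \<longrightarrow> inner x (A *v x) > 0"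
    and bnz: "b \<noteq> 0"
    and Psub: "\<forall>\<mu>\<in>{1..L}. subspace (Ps \<mu>)"
    and Umult: "multilinear_on L Ps U"
    and p1: "p 1 \<in> prodP L Ps"
    and pout: "\<forall>k\<ge>1. \<forall>i. i \<notin> {1..L} \<longrightarrow> p (Suc k) i = 0"
    and als: "\<forall>k\<ge>1. \<forall>\<mu>\<in>{1..L}.
       p (Suc k) \<mu> =
         pinv_on (Ps \<mu>)
           (\<lambda>q. adjoint_on (Ps \<mu>) (als_W U p k \<mu>) (A *v als_W U p k \<mu> q))
           (adjoint_on (Ps \<mu>) (als_W U p k \<mu>) b)"
    and conv: "(\<lambda>k. U (p k)) \<longlonglongrightarrow> vbar"
  shows "\<forall>\<mu>\<in>{0..L}. (\<lambda>k. als_v U p k \<mu>) \<longlonglongrightarrow> vbar"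
proof -
  define base where "base k \<mu> = (\<lambda>i. if i < \<mu> then p (Suc k) i else p k i)" for k \<mu>
  have Wdef: "als_W U p k \<mu> = (\<lambda>q. U ((base k \<mu>)(\<mu> := q)))" for k \<mu>
    by (rule ext) (simp add: als_W_def base_def)
  have basemem: "base k \<mu> \<in> prodP L Ps"
    if "p k \<in> prodP L Ps" "k \<ge> 1" "\<forall>i\<in>{1..<\<mu>}. p (Suc k) i \<in> Ps i" for k \<mu>
    using that pout unfolding prodP_def base_def by auto
  have keyk: "p (Suc k) \<mu> \<in> Ps \<mu> \<and> (\<forall>q\<in>Ps \<mu>. inner (A *v als_W U p k \<mu> (p (Suc k) \<mu>)) (als_W U p k \<mu> q)
                = inner b (als_W U p k \<mu> q))"
    if "p k \<in> prodP L Ps" "k \<ge> 1" "\<mu> \<in> {1..L}" "\<forall>i\<in>{1..<\<mu>}. p (Suc k) i \<in> Ps i" for k \<mu>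
  proof -
    have "linS (Ps \<mu>) (als_W U p k \<mu>)"
      unfolding Wdef using lin_from_multi[OF Umult basemem[OF that(1,2,4)] that(3)] Psub that(3) by blast
    from key[OF this Asym Apd] als that(2,3) show ?thesis by blast
  qed
  have mem: "p k \<in> prodP L Ps" if "k \<ge> 1" for k
    using that
  proof (induction k rule: nat_induct_at_least)
    case base then show ?case using p1 by simp
  next
    case (Suc k)
    have "\<mu> \<in> {1..L} \<longrightarrow> p (Suc k) \<mu> \<in> Ps \<mu>" for \<mu>
    proof (induction \<mu> rule: less_induct)
      case (less \<mu>)
      show ?case
      proof
        assume mu: "\<mu> \<in> {1..L}"
        have "\<forall>i\<in>{1..<\<mu>}. p (Suc k) i \<in> Ps i" using less mu by auto
        then show "p (Suc k) \<mu> \<in> Ps \<mu>" using keyk[OF Suc.IH Suc.hyps mu] by blast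
      qed
    qed
    then show ?case using pout Suc.hyps unfolding prodP_def by auto
  qed
  have normal: "\<forall>q\<in>Ps \<mu>. inner (A *v als_W U p k \<mu> (p (Suc k) \<mu>)) (als_W U p k \<mu> q)
                = inner b (als_W U p k \<mu> q)" if "k \<ge> 1" "\<mu> \<in> {1..L}" for k \<mu>
  proof -
    have "\<forall>i\<in>{1..<\<mu>}. p (Suc k) i \<in> Ps i" using mem[of "Suc k"] that unfolding prodP_def by auto
    then show ?thesis using keyk[OF mem[OF that(1)] that] by blast
  qed
  define v where "v k \<mu> = als_v U p k \<mu>" for k \<mu>
  have vW1: "v k \<mu> = als_W U p k \<mu> (p (Suc k) \<mu>)" for k \<mu>
    unfolding v_def als_v_def Wdef base_def by (rule arg_cong[where f=U]) auto
  have vW0: "v k (\<mu> - 1) = als_W U p k \<mu> (p k \<mu>)" if "\<mu> \<ge> 1" for k \<mu>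
    unfolding v_def als_v_def Wdef base_def using that by (intro arg_cong[where f=U]) (auto simp: fun_eq_iff)
  have v0: "v k 0 = U (p k)" if "k \<ge> 1" for k
  proof -
    have "p k 0 = 0" "p (Suc k) 0 = 0" using mem[of k] mem[of "Suc k"] that unfolding prodP_def by auto
    then show ?thesis unfolding v_def als_v_def by (intro arg_cong[where f=U]) auto
  qed
  have vL: "v k L = U (p (Suc k))" if "k \<ge> 1" for k
  proof -
    have "\<forall>i>L. p k i = 0 \<and> p (Suc k) i = 0" using mem[of k] mem[of "Suc k"] that unfolding prodP_def by auto
    then show ?thesis unfolding v_def als_v_def by (intro arg_cong[where f=U]) (auto simp: fun_eq_iff)
  qed
  define g where "g w = inner (A *v w) w / 2 - inner b w" for w
  define e where "e k \<mu> = v k (\<mu> - 1) - v k \<mu>" for k \<mu>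
  have dec: "g (v k (\<mu> - 1)) - g (v k \<mu>) = inner (e k \<mu>) (A *v e k \<mu>) / 2"
    if "k \<ge> 1" "\<mu> \<in> {1..L}" for k \<mu>
  proof -
    have z: "p k \<mu> \<in> Ps \<mu>" using mem[OF that(1)] that(2) unfolding prodP_def by auto
    have x: "p (Suc k) \<mu> \<in> Ps \<mu>" using mem[of "Suc k"] that unfolding prodP_def by auto
    have h: "inner (A *v v k \<mu>) (e k \<mu>) = inner b (e k \<mu>)"
      using normal[OF that] z x vW0[of \<mu> k] vW1[of k \<mu>] that(2) unfolding e_def
      by (simp add: inner_diff_right)
    have "v k (\<mu> - 1) = v k \<mu> + e k \<mu>" unfolding e_def by simp
    then show ?thesis using energy[OF Asym h] unfolding g_def by simp
  qed
  obtain c where c: "c > 0" "\<And>x. c * (norm x)^2 \<le> inner x (A *v x)"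
    using pd_bound[OF Apd] by blast
  have Ebnd: "c * (norm (e k \<mu>))^2 / 2 \<le> g (v k (\<mu> - 1)) - g (v k \<mu>)"
    if "k \<ge> 1" "\<mu> \<in> {1..L}" for k \<mu>
    using dec[OF that] c(2)[of "e k \<mu>"] by simp
  have mono: "g (v k j) \<le> g (v k i)" if "k \<ge> 1" "i \<le> j" "j \<le> L" for k i j
    using that(2,3)
  proof (induction j rule: dec_induct)
    case base then show ?case by simp
  next
    case (step j)
    have "c * (norm (e k (Suc j)))^2 / 2 \<ge> 0" using c by simp
    then have "g (v k (Suc j)) \<le> g (v k j)" using Ebnd[OF that(1), of "Suc j"] step by simp
    then show ?case using step by simp
  qed
  have bnd: "c * (norm (e k \<mu>))^2 / 2 \<le> g (U (p k)) - g (U (p (Suc k)))"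
    if "k \<ge> 1" "\<mu> \<in> {1..L}" for k \<mu>
  proof -
    have "g (v k (\<mu> - 1)) \<le> g (v k 0)" using mono[OF that(1), of 0 "\<mu> - 1"] that by auto
    moreover have "g (v k L) \<le> g (v k \<mu>)" using mono[OF that(1), of \<mu> L] that by simp
    ultimately show ?thesis using Ebnd[OF that] v0[OF that(1)] vL[OF that(1)] by simp
  qed
  have Av: "(\<lambda>k. A *v U (p k)) \<longlonglongrightarrow> A *v vbar"
    using bounded_linear.tendsto[OF matrix_vector_mul_bounded_linear conv] .
  have gl: "(\<lambda>k. g (U (p k))) \<longlonglongrightarrow> g vbar"
    unfolding g_def by (intro tendsto_intros Av conv) simp
  have D0: "(\<lambda>k. g (U (p k)) - g (U (p (Suc k)))) \<longlonglongrightarrow> 0"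
    using tendsto_diff[OF gl LIMSEQ_Suc[OF gl]] by simp
  have e0: "(\<lambda>k. e k \<mu>) \<longlonglongrightarrow> 0" if "\<mu> \<in> {1..L}" for \<mu>
  proof -
    have D2: "(\<lambda>k. (2 / c) * (g (U (p k)) - g (U (p (Suc k))))) \<longlonglongrightarrow> 0"
      using tendsto_mult[OF tendsto_const D0, of "2/c"] by simp
    have "(\<lambda>k. (norm (e k \<mu>))^2) \<longlonglongrightarrow> 0"
    proof (rule tendsto_sandwich[OF _ _ tendsto_const D2])
      show "\<forall>\<^sub>F k in sequentially. 0 \<le> (norm (e k \<mu>))^2" by simp
      show "\<forall>\<^sub>F k in sequentially. (norm (e k \<mu>))^2 \<le> (2 / c) * (g (U (p k)) - g (U (p (Suc k))))"
      proof (rule eventually_sequentiallyI[of 1])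
        fix k :: nat assume "1 \<le> k"
        from bnd[OF this that] c(1) show "(norm (e k \<mu>))^2 \<le> (2 / c) * (g (U (p k)) - g (U (p (Suc k))))"
          by (simp add: field_simps)
      qed
    qed
    then have "(\<lambda>k. sqrt ((norm (e k \<mu>))^2)) \<longlonglongrightarrow> 0"
      using tendsto_real_sqrt by fastforce
    then have "(\<lambda>k. norm (e k \<mu>)) \<longlonglongrightarrow> 0" by simp
    then show ?thesis using tendsto_norm_zero_iff by blast
  qed
  have "\<mu> \<le> L \<longrightarrow> (\<lambda>k. v k \<mu>) \<longlonglongrightarrow> vbar" for \<mu>
  proof (induction \<mu>)
    case 0
    have "\<forall>\<^sub>F k in sequentially. U (p k) = v k 0"
      by (rule eventually_sequentiallyI[of 1]) (simp add: v0)
    then show ?case using conv tendsto_cong by fastforce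
  next
    case (Suc \<mu>)
    show ?case
    proof
      assume "Suc \<mu> \<le> L"
      then have "(\<lambda>k. v k \<mu> - e k (Suc \<mu>)) \<longlonglongrightarrow> vbar - 0"
        using Suc e0[of "Suc \<mu>"] by (intro tendsto_diff) auto
      then show "(\<lambda>k. v k (Suc \<mu>)) \<longlonglongrightarrow> vbar" unfolding e_def by simp
    qed
  qed
  then show ?thesis unfolding v_def by auto
qed

end
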